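(* Let $\tau\in\mathbb N$ and let $f:\mathbb Z_+\times\mathbb R\to\mathbb R$, continuous in $x$, satisfy: (1) $f$ is asymptotically $\tau$-periodic in $t$ uniformly with respect to $x$ on compact subsets of $\mathbb R$; (2) every $g\in H^+(f)$ is strictly increasing in $x$: $v_1<v_2$ implies $g(t,v_1)<g(t,v_2)$ for all $t\in\mathbb Z_+$; (3) the solution $\varphi(t,u_0,f)$ of $x(t+1)=f(t,x(t))$, $x(0)=u_0$, is bounded on $\mathbb Z_+$. Then $\lim_{t\to+\infty}|\varphi(t+\tau,u_0,f)-\varphi(t,u_0,f)|=0$.
   Context: $C(\mathbb Z_+\times\mathbb R,\mathbb R)$ is the space of functions continuous in $x$, with the topology of uniform convergence on sets $\{t:|t|\le L\}\times K$, $K$ compact. $f^h(t,x)=f(t+h,x)$; $H^+(f)$ is the closure of $\{f^h:h\in\mathbb Z_+\}$. $f$ is asymptotically $\tau$-periodic: $f=P+R$ with $P(t+\tau,x)=P(t,x)$ and $R(t,x)\to0$ as $t\to\infty$ uniformly on compact $x$-sets. *)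

theory Defs
  imports "HOL-Analysis.Analysis"
begin

text \<open>Functions on Z_+ x R are modelled as nat => real => real.\<close>

definition cont_in_x :: "(nat \<Rightarrow> real \<Rightarrow> real) \<Rightarrow> bool" where
  "cont_in_x f \<longleftrightarrow> (\<forall>t. continuous_on UNIV (f t))"

definition shift :: "(nat \<Rightarrow> real \<Rightarrow> real) \<Rightarrow> nat \<Rightarrow> nat \<Rightarrow> real \<Rightarrow> real" where
  "shift f h = (\<lambda>t x. f (t + h) x)"

text \<open>H^+(f): closure of the positive translates of f in C(Z_+ x R, R) with the topology of
  uniform convergence on sets {t. t \<le> L} x K, K compact. A function g lies in the closure iff
  every basic neighbourhood of g meets the set of translates.\<close>
definition Hplus :: "(nat \<Rightarrow> real \<Rightarrow> real) \<Rightarrow> (nat \<Rightarrow> real \<Rightarrow> real) set" where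
  "Hplus f = {g. cont_in_x g \<and>
     (\<forall>L::nat. \<forall>K::real set. \<forall>\<epsilon>>0. compact K \<longrightarrow>
        (\<exists>h. \<forall>t\<le>L. \<forall>x\<in>K. \<bar>shift f h t x - g t x\<bar> < \<epsilon>))}"

definition asympt_periodic :: "nat \<Rightarrow> (nat \<Rightarrow> real \<Rightarrow> real) \<Rightarrow> bool" where
  "asympt_periodic \<tau> f \<longleftrightarrow> (\<exists>P R. (\<forall>t x. f t x = P t x + R t x) \<and>
     (\<forall>t x. P (t + \<tau>) x = P t x) \<and>
     (\<forall>K::real set. compact K \<longrightarrow>
        (\<forall>\<epsilon>>0. \<exists>T. \<forall>t\<ge>T. \<forall>x\<in>K. \<bar>R t x\<bar> < \<epsilon>)))"

primrec sol :: "nat \<Rightarrow> real \<Rightarrow> (nat \<Rightarrow> real \<Rightarrow> real) \<Rightarrow> real" where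
  "sol 0 u0 f = u0"
| "sol (Suc t) u0 f = f t (sol t u0 f)"

end

theory Submission
  imports Defs
begin

primrec phi :: "(nat \<Rightarrow> real \<Rightarrow> real) \<Rightarrow> nat \<Rightarrow> nat \<Rightarrow> real \<Rightarrow> real" where
  "phi P s 0 y = y"
| "phi P s (Suc j) y = P (s + j) (phi P s j y)"

lemma per_iter:
  fixes \<tau> t k :: nat
  assumes "\<forall>t y. P (t + \<tau>) y = P t y"
  shows "P (t + k * \<tau>) = P t"
proof (induction k)
  case 0 then show ?case by simp
next
  case (Suc k)
  have "P (t + Suc k * \<tau>) = P ((t + k * \<tau>) + \<tau>)" by (simp add: algebra_simps)
  also have "\<dots> = P (t + k * \<tau>)" using assms by auto
  finally show ?case using Suc by simp
qed

lemma per_mod: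
  fixes \<tau> t :: nat
  assumes "\<forall>t y. P (t + \<tau>) y = P t y"
  shows "P t = P (t mod \<tau>)"
proof -
  have "P (t mod \<tau> + (t div \<tau>) * \<tau>) = P (t mod \<tau>)" by (rule per_iter[OF assms])
  then show ?thesis by (metis mod_div_mult_eq)
qed

lemma phi_mono:
  assumes "\<forall>t v1 v2. v1 \<le> v2 \<longrightarrow> P t v1 \<le> P t v2" "y1 \<le> y2"
  shows "phi P s j y1 \<le> phi P s j y2"
  using assms by (induction j) auto

lemma bw:
  fixes y :: "nat \<Rightarrow> real"
  assumes "\<forall>n. \<bar>y n\<bar> \<le> M"
  obtains r c where "strict_mono r" "(\<lambda>n. y (r n)) \<longlonglongrightarrow> c"
proof -
  have "seq_compact {-M..M}" by (rule compact_imp_seq_compact) simp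
  moreover have "\<forall>n. y n \<in> {-M..M}"
  proof
    fix n show "y n \<in> {-M..M}" using assms[rule_format, of n] by (auto simp: abs_le_iff)
  qed
  ultimately obtain l r where "strict_mono r" "(y \<circ> r) \<longlonglongrightarrow> l" by (rule seq_compactE)
  then show ?thesis using that by (auto simp: comp_def)
qed

lemma seq_lim:
  fixes x :: "nat \<Rightarrow> real" and \<tau> :: nat
  assumes per: "\<forall>t y. P (t+\<tau>) y = P t y"
   and cont: "\<forall>t y. isCont (P t) y"
   and R: "\<forall>K. compact K \<longrightarrow> (\<forall>\<epsilon>>0. \<exists>T. \<forall>t\<ge>T. \<forall>y\<in>K. \<bar>R t y\<bar> < \<epsilon>)"
   and rec: "\<forall>t. x (Suc t) = P t (x t) + R t (x t)"
   and bd: "\<forall>t. \<bar>x t\<bar> \<le> M"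
   and v1: "\<forall>n. v n \<ge> n" and v2: "\<forall>n. v n mod \<tau> = s"
   and c: "(\<lambda>n. x (v n)) \<longlonglongrightarrow> c"
  shows "(\<lambda>n. x (v n + j)) \<longlonglongrightarrow> phi P s j c"
proof (induction j)
  case 0 then show ?case using c by simp
next
  case (Suc j)
  have eq: "x (Suc (v n + j)) = P (s+j) (x (v n + j)) + R (v n + j) (x (v n + j))" for n
  proof -
    have m: "(v n + j) mod \<tau> = (s + j) mod \<tau>" by (metis mod_add_left_eq v2)
    have "P (v n + j) = P (s + j)"
      using per_mod[OF per, of "v n + j"] per_mod[OF per, of "s + j"] m by simp
    then show ?thesis using rec by simp
  qed
  have t1: "(\<lambda>n. P (s+j) (x (v n + j))) \<longlonglongrightarrow> P (s+j) (phi P s j c)"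
    by (rule isCont_tendsto_compose[OF _ Suc.IH]) (use cont in auto)
  have t2: "(\<lambda>n. R (v n + j) (x (v n + j))) \<longlonglongrightarrow> 0"
  proof (rule LIMSEQ_I)
    fix r :: real assume "0 < r"
    then obtain T where T: "\<forall>t\<ge>T. \<forall>y\<in>{-M..M}. \<bar>R t y\<bar> < r"
      using R compact_Icc by blast
    have "\<forall>n\<ge>T. norm (R (v n + j) (x (v n + j)) - 0) < r"
    proof (intro allI impI)
      fix n assume "n \<ge> T"
      then have "v n + j \<ge> T" using v1 le_trans by fastforce
      moreover have "x (v n + j) \<in> {-M..M}" using bd[rule_format, of "v n + j"] by (auto simp: abs_le_iff)
      ultimately show "norm (R (v n + j) (x (v n + j)) - 0) < r" using T by simp
    qed
    then show "\<exists>no. \<forall>n\<ge>no. norm (R (v n + j) (x (v n + j)) - 0) < r" by blast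
  qed
  show ?case using tendsto_add[OF t1 t2] by (simp add: eq)
qed


lemma one_side:
  fixes x :: "nat \<Rightarrow> real" and \<tau> :: nat
  assumes per: "\<forall>t y. P (t+\<tau>) y = P t y" and tau: "\<tau> > 0"
   and cont: "\<forall>t y. isCont (P t) y"
   and mono: "\<forall>t v1 v2. v1 \<le> v2 \<longrightarrow> P t v1 \<le> P t v2"
   and R: "\<forall>K. compact K \<longrightarrow> (\<forall>\<epsilon>>0. \<exists>T. \<forall>t\<ge>T. \<forall>y\<in>K. \<bar>R t y\<bar> < \<epsilon>)"
   and rec: "\<forall>t. x (Suc t) = P t (x t) + R t (x t)"
   and bd: "\<forall>t. \<bar>x t\<bar> \<le> M"
   and dpos: "\<delta> > 0"
  shows "\<exists>T. \<forall>t\<ge>T. x (t+\<tau>) - x t < \<delta>"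
proof (rule ccontr)
  assume "\<not> ?thesis"
  hence inf: "\<forall>T. \<exists>t\<ge>T. x (t+\<tau>) - x t \<ge> \<delta>" by (auto simp: not_less)
  have "\<exists>s<\<tau>. \<forall>T. \<exists>t\<ge>T. t mod \<tau> = s \<and> x (t+\<tau>) - x t \<ge> \<delta>"
  proof (rule ccontr)
    assume nA: "\<not> ?thesis"
    have "\<forall>s<\<tau>. \<exists>T. \<forall>t\<ge>T. t mod \<tau> = s \<longrightarrow> x (t+\<tau>) - x t < \<delta>"
    proof (intro allI impI)
      fix s assume sl: "s < \<tau>"
      show "\<exists>T. \<forall>t\<ge>T. t mod \<tau> = s \<longrightarrow> x (t+\<tau>) - x t < \<delta>"
      proof (rule ccontr)
        assume "\<not> (\<exists>T. \<forall>t\<ge>T. t mod \<tau> = s \<longrightarrow> x (t+\<tau>) - x t < \<delta>)"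
        then have "\<forall>T. \<exists>t\<ge>T. t mod \<tau> = s \<and> x (t+\<tau>) - x t \<ge> \<delta>" by (auto simp: not_less)
        then show False using nA sl by blast
      qed
    qed
    then have "\<forall>s. \<exists>T. s < \<tau> \<longrightarrow> (\<forall>t\<ge>T. t mod \<tau> = s \<longrightarrow> x (t+\<tau>) - x t < \<delta>)" by blast
    then obtain Tf where Tf: "\<forall>s<\<tau>. \<forall>t\<ge>Tf s. t mod \<tau> = s \<longrightarrow> x (t+\<tau>) - x t < \<delta>"
      using choice[of "\<lambda>s T. s < \<tau> \<longrightarrow> (\<forall>t\<ge>T. t mod \<tau> = s \<longrightarrow> x (t+\<tau>) - x t < \<delta>)"] by blast
    from inf obtain t where t: "t \<ge> (\<Sum>s<\<tau>. Tf s)" "x (t+\<tau>) - x t \<ge> \<delta>" by blast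
    moreover have "Tf (t mod \<tau>) \<le> (\<Sum>s<\<tau>. Tf s)" using tau by (intro member_le_sum) auto
    ultimately have "t \<ge> Tf (t mod \<tau>)" by linarith
    moreover have "t mod \<tau> < \<tau>" using tau by simp
    ultimately have "x (t+\<tau>) - x t < \<delta>" using Tf by blast
    then show False using t(2) by simp
  qed
  then obtain s where s: "s<\<tau>" "\<forall>T. \<exists>t\<ge>T. t mod \<tau> = s \<and> x (t+\<tau>) - x t \<ge> \<delta>" by blast
  then have "\<forall>n. \<exists>t. t \<ge> n \<and> t mod \<tau> = s \<and> x (t + \<tau>) - x t \<ge> \<delta>" by blast
  then obtain u where u: "\<forall>n. u n \<ge> n \<and> u n mod \<tau> = s \<and> x (u n + \<tau>) - x (u n) \<ge> \<delta>"
    using choice[of "\<lambda>n t. t \<ge> n \<and> t mod \<tau> = s \<and> x (t + \<tau>) - x t \<ge> \<delta>"] by blast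
  have bdu: "\<forall>n. \<bar>x (u n)\<bar> \<le> M" using bd by blast
  obtain r c where r: "strict_mono r" and c: "(\<lambda>n. x (u (r n))) \<longlonglongrightarrow> c" using bw[OF bdu] by blast
  define v where "v = (\<lambda>n. u (r n))"
  have v1: "\<forall>n. v n \<ge> n" unfolding v_def using u seq_suble[OF r] le_trans by blast
  have v2: "\<forall>n. v n mod \<tau> = s" using u unfolding v_def by simp
  have vc: "(\<lambda>n. x (v n)) \<longlonglongrightarrow> c" using c unfolding v_def .
  have vt: "(\<lambda>n. x (v n + \<tau>)) \<longlonglongrightarrow> phi P s \<tau> c"
    by (rule seq_lim[OF per cont R rec bd v1 v2 vc])
  have "(\<lambda>n. x (v n + \<tau>) - x (v n)) \<longlonglongrightarrow> phi P s \<tau> c - c" by (rule tendsto_diff[OF vt vc])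
  moreover have "\<forall>n. x (v n + \<tau>) - x (v n) \<ge> \<delta>" using u unfolding v_def by blast
  ultimately have pc: "phi P s \<tau> c - c \<ge> \<delta>" by (intro LIMSEQ_le_const) auto
  define d where "d = c + \<delta>/2"
  have cd: "c < d" using dpos d_def by simp
  have pd: "phi P s \<tau> d > d"
    using phi_mono[OF mono, of c d s \<tau>] cd pc d_def dpos by linarith
  have pcd: "phi P s \<tau> c > d" using pc d_def dpos by linarith
  have trap: "\<exists>T. \<forall>t\<ge>T. t mod \<tau> = s \<and> x t \<ge> d \<longrightarrow> x (t+\<tau>) \<ge> d"
  proof (rule ccontr)
    assume "\<not> ?thesis"
    hence "\<forall>n. \<exists>t\<ge>n. t mod \<tau> = s \<and> x t \<ge> d \<and> x (t+\<tau>) < d" by (auto simp: not_le)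
    then have "\<forall>n. \<exists>t. t \<ge> n \<and> t mod \<tau> = s \<and> x t \<ge> d \<and> x (t+\<tau>) < d" by blast
    then obtain w where w: "\<forall>n. w n \<ge> n \<and> w n mod \<tau> = s \<and> x (w n) \<ge> d \<and> x (w n+\<tau>) < d"
      using choice[of "\<lambda>n t. t \<ge> n \<and> t mod \<tau> = s \<and> x t \<ge> d \<and> x (t+\<tau>) < d"] by blast
    have bdw: "\<forall>n. \<bar>x (w n)\<bar> \<le> M" using bd by blast
    obtain r' c' where r': "strict_mono r'" and c': "(\<lambda>n. x (w (r' n))) \<longlonglongrightarrow> c'" using bw[OF bdw] by blast
    define w' where "w' = (\<lambda>n. w (r' n))"
    have w1: "\<forall>n. w' n \<ge> n" unfolding w'_def using w seq_suble[OF r'] le_trans by blast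
    have w2: "\<forall>n. w' n mod \<tau> = s" using w unfolding w'_def by simp
    have wc: "(\<lambda>n. x (w' n)) \<longlonglongrightarrow> c'" using c' unfolding w'_def .
    have wt: "(\<lambda>n. x (w' n + \<tau>)) \<longlonglongrightarrow> phi P s \<tau> c'"
      by (rule seq_lim[OF per cont R rec bd w1 w2 wc])
    have "c' \<ge> d" using w unfolding w'_def by (intro LIMSEQ_le_const[OF c']) auto
    moreover have "phi P s \<tau> c' \<le> d" using w by (intro LIMSEQ_le_const2[OF wt]) (auto simp: w'_def less_imp_le)
    ultimately show False using phi_mono[OF mono, of d c' s \<tau>] pd by linarith
  qed
  then obtain T where T: "\<forall>t\<ge>T. t mod \<tau> = s \<and> x t \<ge> d \<longrightarrow> x (t+\<tau>) \<ge> d" by blast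
  obtain N1 where N1: "\<forall>n\<ge>N1. x (v n) < d"
    using order_tendstoD(2)[OF vc cd] unfolding eventually_sequentially by blast
  obtain N2 where N2: "\<forall>n\<ge>N2. x (v n + \<tau>) > d"
    using order_tendstoD(1)[OF vt pcd] unfolding eventually_sequentially by blast
  define n0 where "n0 = N2 + T"
  have h0: "x (v n0 + \<tau>) \<ge> d" using N2[rule_format, of n0] n0_def by simp
  have vT: "v n0 \<ge> T" using v1[rule_format, of n0] n0_def by simp
  have inv: "x (v n0 + Suc m * \<tau>) \<ge> d" for m
  proof (induction m)
    case 0 then show ?case using h0 by simp
  next
    case (Suc m)
    have "v n0 + Suc m * \<tau> \<ge> T" using vT by simp
    moreover have "(v n0 + Suc m * \<tau>) mod \<tau> = s" using v2[rule_format, of n0] by (simp only: mod_mult_self1)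
    ultimately have "x (v n0 + Suc m * \<tau> + \<tau>) \<ge> d" using T Suc by blast
    then show ?case by (simp add: algebra_simps)
  qed
  define n1 where "n1 = v n0 + \<tau> + N1"
  have vn1: "v n1 \<ge> v n0 + \<tau>" using v1[rule_format, of n1] n1_def by simp
  have "\<tau> dvd (v n1 - v n0)" using mod_eq_dvd_iff_nat[of "v n0" "v n1" \<tau>] vn1 v2 by simp
  then obtain k where k: "v n1 - v n0 = \<tau> * k" by (auto elim: dvdE)
  have "k \<noteq> 0"
  proof
    assume "k = 0" then have "v n1 - v n0 = 0" using k by simp
    then show False using vn1 tau by linarith
  qed
  then obtain m where "k = Suc m" by (cases k) auto
  then have "v n1 = v n0 + Suc m * \<tau>" using k vn1 by (simp add: algebra_simps)
  then have "x (v n1) \<ge> d" using inv by simp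
  moreover have "x (v n1) < d" using N1[rule_format, of n1] n1_def by simp
  ultimately show False by simp
qed


theorem mainTheorem18:
  fixes \<tau> :: nat and f :: "nat \<Rightarrow> real \<Rightarrow> real" and u0 :: real
  assumes "cont_in_x f"
    and "asympt_periodic \<tau> f"
    and "\<forall>g\<in>Hplus f. \<forall>t v1 v2. v1 < v2 \<longrightarrow> g t v1 < g t v2"
    and "\<exists>M. \<forall>t. \<bar>sol t u0 f\<bar> \<le> M"
  shows "(\<lambda>t. \<bar>sol (t + \<tau>) u0 f - sol t u0 f\<bar>) \<longlonglongrightarrow> 0"
proof (cases "\<tau> = 0")
  case True then show ?thesis by simp
next
  case False
  then have tau: "\<tau> > 0" by simp
  obtain M where bd: "\<forall>t. \<bar>sol t u0 f\<bar> \<le> M" using assms(4) by blast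
  obtain P R where fPR: "\<forall>t x. f t x = P t x + R t x" and per: "\<forall>t x. P (t+\<tau>) x = P t x"
     and R: "\<forall>K::real set. compact K \<longrightarrow> (\<forall>\<epsilon>>0. \<exists>T. \<forall>t\<ge>T. \<forall>x\<in>K. \<bar>R t x\<bar> < \<epsilon>)"
    using assms(2) unfolding asympt_periodic_def by blast
  have fH: "f \<in> Hplus f" using assms(1) unfolding Hplus_def shift_def
    by (auto intro!: exI[of _ 0])
  have fmono: "\<forall>t v1 v2. v1 < v2 \<longrightarrow> f t v1 < f t v2" using assms(3) fH by blast
  have Pt: "P (t + k*\<tau>) = P t" for t k using per_iter[OF per] .
  have TT: "T \<le> T * \<tau>" for T using tau by simp
  have mono: "\<forall>t v1 v2. v1 \<le> v2 \<longrightarrow> P t v1 \<le> P t v2"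
  proof (intro allI impI)
    fix t and v1 v2 :: real assume le: "v1 \<le> v2"
    show "P t v1 \<le> P t v2"
    proof (rule ccontr)
      assume nle: "\<not> ?thesis"
      define e where "e = (P t v1 - P t v2)/2"
      have e: "e > 0" using nle e_def by simp
      have "compact {v1, v2}" by (intro finite_imp_compact) simp
      then obtain T where T: "\<forall>t'\<ge>T. \<forall>y\<in>{v1,v2}. \<bar>R t' y\<bar> < e" using R e by blast
      define t' where "t' = t + T*\<tau>"
      have t'T: "t' \<ge> T" unfolding t'_def by (rule trans_le_add2[OF TT])
      have P': "P t' = P t" using Pt t'_def by simp
      have "f t' v1 \<le> f t' v2" using fmono le by (cases "v1 = v2") (auto simp: less_imp_le)
      moreover have "\<bar>R t' v1\<bar> < e" "\<bar>R t' v2\<bar> < e" using T t'T by auto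
      then have "- R t' v1 < e" "R t' v2 < e" by (simp_all add: abs_less_iff)
      moreover have "f t' v1 = P t v1 + R t' v1" "f t' v2 = P t v2 + R t' v2"
        using fPR P' by simp_all
      moreover have "2 * e = P t v1 - P t v2" using e_def by simp
      ultimately show False by linarith
    qed
  qed
  have fcont: "\<forall>t y. isCont (f t) y" using assms(1) unfolding cont_in_x_def
    using continuous_on_eq_continuous_at[OF open_UNIV] by blast
  have cont: "\<forall>t y. isCont (P t) y"
  proof (intro allI)
    fix t and y :: real
    show "isCont (P t) y" unfolding continuous_at_eps_delta
    proof (intro allI impI)
      fix e :: real assume e: "e > 0"
      then have e3: "e/3 > 0" by simp
      obtain T where T: "\<forall>t'\<ge>T. \<forall>z\<in>cball y 1. \<bar>R t' z\<bar> < e/3" using R e3 compact_cball by blast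
      define t' where "t' = t + T*\<tau>"
      have t'T: "t' \<ge> T" unfolding t'_def by (rule trans_le_add2[OF TT])
      have P': "P t' = P t" using Pt t'_def by simp
      obtain d where d: "d>0" "\<forall>z. dist z y < d \<longrightarrow> dist (f t' z) (f t' y) < e/3"
      proof -
        have "isCont (f t') y" using fcont by blast
        then show ?thesis using that e3 unfolding continuous_at_eps_delta by blast
      qed
      show "\<exists>d>0. \<forall>z. dist z y < d \<longrightarrow> dist (P t z) (P t y) < e"
      proof (intro exI[of _ "min d 1"] conjI allI impI)
        show "min d 1 > 0" using d by simp
        fix z assume z: "dist z y < min d 1"
        then have zin: "z \<in> cball y 1" "y \<in> cball y 1" by (auto simp: dist_commute less_imp_le)
        have r1: "\<bar>R t' z\<bar> < e/3" "\<bar>R t' y\<bar> < e/3" using T t'T zin by auto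
        have r2: "\<bar>f t' z - f t' y\<bar> < e/3" using d z by (simp add: dist_real_def)
        have "P t z = f t' z - R t' z" "P t y = f t' y - R t' y"
          using fPR[rule_format, of t' z] fPR[rule_format, of t' y] P' by simp_all
        moreover have "R t' z < e/3" "- R t' z < e/3" "R t' y < e/3" "- R t' y < e/3"
          using r1 by (simp_all only: abs_less_iff)
        moreover have "f t' z - f t' y < e/3" "- (f t' z - f t' y) < e/3"
          using r2 by (simp_all only: abs_less_iff)
        ultimately have "P t z - P t y < e" "- (P t z - P t y) < e" by linarith+
        then show "dist (P t z) (P t y) < e" unfolding dist_real_def by (simp only: abs_less_iff)
      qed
    qed
  qed
  have rec: "\<forall>t. sol (Suc t) u0 f = P t (sol t u0 f) + R t (sol t u0 f)" by (simp add: fPR)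
  have A: "\<exists>T. \<forall>t\<ge>T. sol (t+\<tau>) u0 f - sol t u0 f < \<delta>" if "\<delta> > 0" for \<delta>
    by (rule one_side[OF per tau cont mono R rec bd that])
  have per': "\<forall>t y. (\<lambda>t y. - P t (- y)) (t+\<tau>) y = (\<lambda>t y. - P t (- y)) t y" using per by simp
  have cont': "\<forall>t y. isCont ((\<lambda>t y. - P t (- y)) t) y"
  proof (intro allI)
    fix t and y :: real
    have m: "isCont (\<lambda>y. - y) (y::real)" by (intro continuous_intros)
    have "isCont (\<lambda>y. P t (- y)) y"
      by (rule isCont_o2[OF m]) (use cont in blast)
    then show "isCont ((\<lambda>t y. - P t (- y)) t) y" by (simp add: isCont_minus)
  qed
  have mono': "\<forall>t v1 v2. v1 \<le> v2 \<longrightarrow> (\<lambda>t y. - P t (- y)) t v1 \<le> (\<lambda>t y. - P t (- y)) t v2"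
    using mono by simp
  have R': "\<forall>K::real set. compact K \<longrightarrow> (\<forall>\<epsilon>>0. \<exists>T. \<forall>t\<ge>T. \<forall>y\<in>K. \<bar>(\<lambda>t y. - R t (- y)) t y\<bar> < \<epsilon>)"
  proof (intro allI impI)
    fix K :: "real set" and \<epsilon> :: real assume K: "compact K" and \<epsilon>: "\<epsilon> > 0"
    obtain T where T: "\<forall>t\<ge>T. \<forall>y\<in>uminus ` K. \<bar>R t y\<bar> < \<epsilon>" using R compact_negations[OF K] \<epsilon> by blast
    show "\<exists>T. \<forall>t\<ge>T. \<forall>y\<in>K. \<bar>(\<lambda>t y. - R t (- y)) t y\<bar> < \<epsilon>"
      using T by (intro exI[of _ T]) auto
  qed
  have rec': "\<forall>t. (\<lambda>t. - sol t u0 f) (Suc t) = (\<lambda>t y. - P t (- y)) t ((\<lambda>t. - sol t u0 f) t)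
      + (\<lambda>t y. - R t (- y)) t ((\<lambda>t. - sol t u0 f) t)" by (simp add: fPR)
  have bd': "\<forall>t. \<bar>(\<lambda>t. - sol t u0 f) t\<bar> \<le> M" using bd by simp
  have B: "\<exists>T. \<forall>t\<ge>T. (\<lambda>t. - sol t u0 f) (t+\<tau>) - (\<lambda>t. - sol t u0 f) t < \<delta>" if "\<delta> > 0" for \<delta>
    by (rule one_side[OF per' tau cont' mono' R' rec' bd' that])
  show ?thesis
  proof (rule LIMSEQ_I)
    fix r :: real assume r: "0 < r"
    obtain T1 where T1: "\<forall>t\<ge>T1. sol (t+\<tau>) u0 f - sol t u0 f < r" using A[OF r] by blast
    obtain T2 where T2: "\<forall>t\<ge>T2. - sol (t+\<tau>) u0 f - - sol t u0 f < r" using B[OF r] by auto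
    have "\<forall>n\<ge>max T1 T2. norm (\<bar>sol (n + \<tau>) u0 f - sol n u0 f\<bar> - 0) < r"
      using T1 T2 by (auto simp: abs_less_iff)
    then show "\<exists>no. \<forall>n\<ge>no. norm (\<bar>sol (n + \<tau>) u0 f - sol n u0 f\<bar> - 0) < r" by blast
  qed
qed

end
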